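(* Let $\Omega$ be a semigroup and $\mathcal{O}=(\{\mathcal{O}(n)\}_{n\ge1},\circ_i,\mathds{1})$ a nonsymmetric operad. For $n\ge1$ let $\mathcal{O}^\Omega(n)$ be the $\mathbf{k}$-module of collections $f=\{f_{\alpha_1,\dots,\alpha_n}\in\mathcal{O}(n)\}_{\alpha_1,\dots,\alpha_n\in\Omega}$ labelled by $\Omega^{\times n}$, and for $f\in\mathcal{O}^\Omega(m)$, $g\in\mathcal{O}^\Omega(n)$, $1\le i\le m$ define $(f\circ_i^\Omega g)_{\alpha_1,\dots,\alpha_{m+n-1}}=f_{\alpha_1,\dots,\alpha_{i-1},\,\alpha_i\alpha_{i+1}\cdots\alpha_{i+n-1},\,\alpha_{i+n},\dots,\alpha_{m+n-1}}\circ_i g_{\alpha_i,\dots,\alpha_{i+n-1}}$. Let $\mathds{1}\in\mathcal{O}^\Omega(1)$ be the collection with $\mathds{1}_\alpha=\mathds{1}$ for all $\alpha\in\Omega$. Then $\mathcal{O}^\Omega=(\{\mathcal{O}^\Omega(n)\}_{n\ge1},\circ_i^\Omega,\mathds{1})$ is a nonsymmetric operad.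
   Context: $\mathbf{k}$ is a commutative unital ring of characteristic $0$; $\Omega$ is a semigroup (not necessarily commutative or unital) with product written by juxtaposition. A nonsymmetric operad consists of $\mathbf{k}$-modules $\mathcal{O}(n)$, $n\ge1$, bilinear partial compositions $\circ_i:\mathcal{O}(m)\otimes\mathcal{O}(n)\to\mathcal{O}(m+n-1)$ ($1\le i\le m$) and $\mathds{1}\in\mathcal{O}(1)$ with $(f\circ_i g)\circ_{i+j-1}h=f\circ_i(g\circ_j h)$ ($1\le j\le n$), $(f\circ_i g)\circ_{j+n-1}h=(f\circ_j h)\circ_i g$ ($i<j$), and $f\circ_i\mathds{1}=\mathds{1}\circ_1 f=f$. *)

theory Defs
  imports Main "HOL-Library.Function_Algebras"
begin

definition kmodule :: "('k::comm_ring_1 \<Rightarrow> 'v::ab_group_add \<Rightarrow> 'v) \<Rightarrow> 'v set \<Rightarrow> bool" where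
  "kmodule sm A \<longleftrightarrow>
     0 \<in> A \<and> (\<forall>x\<in>A. \<forall>y\<in>A. x + y \<in> A) \<and> (\<forall>x\<in>A. - x \<in> A) \<and>
     (\<forall>c. \<forall>x\<in>A. sm c x \<in> A) \<and>
     (\<forall>a b. \<forall>x\<in>A. sm (a + b) x = sm a x + sm b x) \<and>
     (\<forall>a. \<forall>x\<in>A. \<forall>y\<in>A. sm a (x + y) = sm a x + sm a y) \<and>
     (\<forall>a b. \<forall>x\<in>A. sm (a * b) x = sm a (sm b x)) \<and>
     (\<forall>x\<in>A. sm 1 x = x)"

definition ns_operad ::
  "('k::comm_ring_1 \<Rightarrow> 'v::ab_group_add \<Rightarrow> 'v) \<Rightarrow> (nat \<Rightarrow> 'v set)
   \<Rightarrow> (nat \<Rightarrow> nat \<Rightarrow> nat \<Rightarrow> 'v \<Rightarrow> 'v \<Rightarrow> 'v) \<Rightarrow> 'v \<Rightarrow> bool" where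
  "ns_operad sm Op cmp u \<longleftrightarrow>
     (\<forall>n\<ge>1. kmodule sm (Op n)) \<and>
     (\<forall>m n i f g. 1 \<le> n \<and> 1 \<le> i \<and> i \<le> m \<and> f \<in> Op m \<and> g \<in> Op n \<longrightarrow>
        cmp m n i f g \<in> Op (m + n - 1)) \<and>
     (\<forall>m n i f f' g c. 1 \<le> n \<and> 1 \<le> i \<and> i \<le> m \<and> f \<in> Op m \<and> f' \<in> Op m \<and> g \<in> Op n \<longrightarrow>
        cmp m n i (f + f') g = cmp m n i f g + cmp m n i f' g \<and>
        cmp m n i (sm c f) g = sm c (cmp m n i f g)) \<and>
     (\<forall>m n i f g g' c. 1 \<le> n \<and> 1 \<le> i \<and> i \<le> m \<and> f \<in> Op m \<and> g \<in> Op n \<and> g' \<in> Op n \<longrightarrow>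
        cmp m n i f (g + g') = cmp m n i f g + cmp m n i f g' \<and>
        cmp m n i f (sm c g) = sm c (cmp m n i f g)) \<and>
     (\<forall>m n p i j f g h. 1 \<le> i \<and> i \<le> m \<and> 1 \<le> j \<and> j \<le> n \<and> 1 \<le> p \<and>
        f \<in> Op m \<and> g \<in> Op n \<and> h \<in> Op p \<longrightarrow>
        cmp (m + n - 1) p (i + j - 1) (cmp m n i f g) h = cmp m (n + p - 1) i f (cmp n p j g h)) \<and>
     (\<forall>m n p i j f g h. 1 \<le> i \<and> i < j \<and> j \<le> m \<and> 1 \<le> n \<and> 1 \<le> p \<and>
        f \<in> Op m \<and> g \<in> Op n \<and> h \<in> Op p \<longrightarrow>
        cmp (m + n - 1) p (j + n - 1) (cmp m n i f g) h = cmp (m + p - 1) n i (cmp m p j f h) g) \<and>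
     u \<in> Op 1 \<and>
     (\<forall>m i f. 1 \<le> i \<and> i \<le> m \<and> f \<in> Op m \<longrightarrow> cmp m 1 i f u = f) \<and>
     (\<forall>m f. 1 \<le> m \<and> f \<in> Op m \<longrightarrow> cmp 1 m 1 u f = f)"

fun prod_ne :: "'w::semigroup_mult list \<Rightarrow> 'w" where
  "prod_ne [] = undefined"
| "prod_ne [a] = a"
| "prod_ne (a # b # xs) = a * prod_ne (b # xs)"

text \<open>Op^\<Omega>(n): collections labelled by words of length n over \<Omega>
  (extended by 0 on words of other lengths).\<close>
definition OmegaO :: "(nat \<Rightarrow> 'v::ab_group_add set) \<Rightarrow> nat \<Rightarrow> ('w list \<Rightarrow> 'v) set" where
  "OmegaO Op n = {f. (\<forall>xs. length xs = n \<longrightarrow> f xs \<in> Op n) \<and> (\<forall>xs. length xs \<noteq> n \<longrightarrow> f xs = 0)}"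

definition OmegaSmult :: "('k \<Rightarrow> 'v \<Rightarrow> 'v) \<Rightarrow> 'k \<Rightarrow> ('w list \<Rightarrow> 'v) \<Rightarrow> ('w list \<Rightarrow> 'v)" where
  "OmegaSmult sm c f = (\<lambda>xs. sm c (f xs))"

definition OmegaComp ::
  "(nat \<Rightarrow> nat \<Rightarrow> nat \<Rightarrow> 'v \<Rightarrow> 'v \<Rightarrow> 'v) \<Rightarrow> nat \<Rightarrow> nat \<Rightarrow> nat
   \<Rightarrow> ('w::semigroup_mult list \<Rightarrow> 'v::ab_group_add) \<Rightarrow> ('w list \<Rightarrow> 'v) \<Rightarrow> ('w list \<Rightarrow> 'v)" where
  "OmegaComp cmp m n i f g = (\<lambda>as.
     if length as = m + n - 1 then
       cmp m n i
         (f (take (i - 1) as @ [prod_ne (take n (drop (i - 1) as))] @ drop (i - 1 + n) as))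
         (g (take n (drop (i - 1) as)))
     else 0)"

definition OmegaUnit :: "'v::ab_group_add \<Rightarrow> ('w list \<Rightarrow> 'v)" where
  "OmegaUnit u = (\<lambda>as. if length as = 1 then u else 0)"

end

theory Submission
  imports Defs
begin

lemma prod_ne_Cons: "zs \<noteq> [] \<Longrightarrow> prod_ne (a # zs) = a * prod_ne zs"
  by (cases zs) auto

lemma prod_ne_append: "xs \<noteq> [] \<Longrightarrow> ys \<noteq> [] \<Longrightarrow> prod_ne (xs @ ys) = prod_ne xs * prod_ne ys"
proof (induction xs rule: prod_ne.induct)
  case (3 a b xs) then show ?case by (simp add: mult.assoc)
qed (auto simp: neq_Nil_conv)

lemma prod_ne_collapse: "ys \<noteq> [] \<Longrightarrow> prod_ne (xs @ prod_ne ys # zs) = prod_ne (xs @ ys @ zs)"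
  by (cases "xs = []"; cases "zs = []") (simp_all add: prod_ne_append prod_ne_Cons mult.assoc)

lemma split2: "length as = k1 + k2 \<Longrightarrow> \<exists>a b. as = a @ b \<and> length a = k1 \<and> length b = k2"
  by (rule exI[of _ "take k1 as"], rule exI[of _ "drop k1 as"]) simp

lemma assoc_words:
  fixes a b c d e :: "'w::semigroup_mult list" and f g h :: "'w list \<Rightarrow> 'v::ab_group_add"
  assumes "c \<noteq> []"
  shows "OmegaComp cmp (length a + 1 + length e + (length b + 1 + length d) - 1) (length c) (length a + 1 + (length b + 1) - 1)
          (OmegaComp cmp (length a + 1 + length e) (length b + 1 + length d) (length a + 1) f g) h (a@b@c@d@e)
       = cmp (length a + 1 + length e + (length b + 1 + length d) - 1) (length c) (length a + 1 + (length b + 1) - 1)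
           (cmp (length a + 1 + length e) (length b + 1 + length d) (length a + 1)
              (f (a @ [prod_ne (b @ c @ d)] @ e)) (g (b @ [prod_ne c] @ d))) (h c)"
  using assms unfolding OmegaComp_def by (simp add: prod_ne_collapse)

lemma assoc_words2:
  fixes a b c d e :: "'w::semigroup_mult list" and f g h :: "'w list \<Rightarrow> 'v::ab_group_add"
  assumes "c \<noteq> []"
  shows "OmegaComp cmp (length a + 1 + length e) (length b + 1 + length d + length c - 1) (length a + 1) f
           (OmegaComp cmp (length b + 1 + length d) (length c) (length b + 1) g h) (a@b@c@d@e)
       = cmp (length a + 1 + length e) (length b + 1 + length d + length c - 1) (length a + 1) 
              (f (a @ [prod_ne (b @ c @ d)] @ e)) (cmp (length b + 1 + length d) (length c) (length b + 1) (g (b @ [prod_ne c] @ d)) (h c))"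
  using assms unfolding OmegaComp_def by (simp add: prod_ne_collapse)


lemma comm_words:
  fixes a b c d e :: "'w::semigroup_mult list" and f g h :: "'w list \<Rightarrow> 'v::ab_group_add"
  assumes "b \<noteq> []" "d \<noteq> []"
  shows "OmegaComp cmp (length a + length c + length e + 2 + length b - 1) (length d) (length a + length c + 2 + length b - 1)
          (OmegaComp cmp (length a + length c + length e + 2) (length b) (length a + 1) f g) h (a@b@c@d@e)
       = cmp (length a + length c + length e + 2 + length b - 1) (length d) (length a + length c + 2 + length b - 1)
           (cmp (length a + length c + length e + 2) (length b) (length a + 1)
              (f (a @ [prod_ne b] @ c @ [prod_ne d] @ e)) (g b)) (h d)"
  using assms unfolding OmegaComp_def by simp

lemma comm_words2:
  fixes a b c d e :: "'w::semigroup_mult list" and f g h :: "'w list \<Rightarrow> 'v::ab_group_add"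
  assumes "b \<noteq> []" "d \<noteq> []"
  shows "OmegaComp cmp (length a + length c + length e + 2 + length d - 1) (length b) (length a + 1)
          (OmegaComp cmp (length a + length c + length e + 2) (length d) (length a + length c + 2) f h) g (a@b@c@d@e)
       = cmp (length a + length c + length e + 2 + length d - 1) (length b) (length a + 1)
           (cmp (length a + length c + length e + 2) (length d) (length a + length c + 2)
              (f (a @ [prod_ne b] @ c @ [prod_ne d] @ e)) (h d)) (g b)"
  using assms unfolding OmegaComp_def by simp

lemma unit_r: "OmegaComp cmp m 1 i f (OmegaUnit u) as = (if length as = m then cmp m 1 i (f as) u else 0)"
  if "1 \<le> i" "i \<le> m"
proof -
  have "take (i - 1) as @ as ! (i - 1) # drop i as = as" if "length as = m"
    using id_take_nth_drop[of "i - 1" as] \<open>1 \<le> i\<close> \<open>i \<le> m\<close> that by simp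
  moreover have "take 1 (drop (i - 1) as) = [as ! (i - 1)]" if "length as = m"
    using \<open>1 \<le> i\<close> \<open>i \<le> m\<close> that by (simp add: Cons_nth_drop_Suc[symmetric])
  ultimately  show ?thesis using \<open>1 \<le> i\<close> \<open>i \<le> m\<close> unfolding OmegaComp_def OmegaUnit_def by auto
qed

lemma unit_l: "OmegaComp cmp 1 m 1 (OmegaUnit u) f as = (if length as = m then cmp 1 m 1 u (f as) else 0)"
  if "1 \<le> m"
  using that unfolding OmegaComp_def OmegaUnit_def by auto

lemma kmod0: "kmodule sm A \<Longrightarrow> sm c 0 = 0"
  unfolding kmodule_def by (metis add_cancel_right_right)

lemma kmodule_Omega: assumes "kmodule sm (Op n)" shows "kmodule (OmegaSmult sm) (OmegaO Op n)"
  using assms kmod0[OF assms] unfolding kmodule_def OmegaO_def OmegaSmult_def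
  apply (auto simp: fun_eq_iff)
  apply (case_tac "length xa = n"; simp)+
  done


lemma split5:
  assumes "length as = k1+k2+k3+k4+k5"
  shows "\<exists>a b c d e. as = a@b@c@d@e \<and> length a = k1 \<and> length b = k2 \<and> length c = k3 \<and> length d = k4 \<and> length e = k5"
proof -
  obtain a r where 1: "as = a @ r" "length a = k1" "length r = k2+k3+k4+k5"
    using split2[of as k1 "k2+k3+k4+k5"] assms by (auto simp: add.assoc)
  obtain b r2 where 2: "r = b @ r2" "length b = k2" "length r2 = k3+k4+k5"
    using split2[of r k2 "k3+k4+k5"] 1 by (auto simp: add.assoc)
  obtain c r3 where 3: "r2 = c @ r3" "length c = k3" "length r3 = k4+k5"
    using split2[of r2 k3 "k4+k5"] 2 by (auto simp: add.assoc)
  obtain d e where 4: "r3 = d @ e" "length d = k4" "length e = k5"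
    using split2[of r3 k4 k5] 3 by auto
  show ?thesis using 1 2 3 4 by blast
qed

lemma assoc_w1:
  fixes a b c d e :: "'w::semigroup_mult list" and f g h :: "'w list \<Rightarrow> 'v::ab_group_add"
  assumes "c \<noteq> []" "i = length a + 1" "j = length b + 1" "p = length c" "n = length b + 1 + length d" "m = length a + 1 + length e"
  shows "OmegaComp cmp (m+n-1) p (i+j-1) (OmegaComp cmp m n i f g) h (a@b@c@d@e)
     = cmp (m+n-1) p (i+j-1) (cmp m n i (f (a @ [prod_ne (b @ c @ d)] @ e)) (g (b @ [prod_ne c] @ d))) (h c)"
  using assms unfolding OmegaComp_def by (simp add: prod_ne_collapse)

lemma assoc_w2:
  fixes a b c d e :: "'w::semigroup_mult list" and f g h :: "'w list \<Rightarrow> 'v::ab_group_add"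
  assumes "c \<noteq> []" "i = length a + 1" "j = length b + 1" "p = length c" "n = length b + 1 + length d" "m = length a + 1 + length e"
  shows "OmegaComp cmp m (n+p-1) i f (OmegaComp cmp n p j g h) (a@b@c@d@e)
     = cmp m (n+p-1) i (f (a @ [prod_ne (b @ c @ d)] @ e)) (cmp n p j (g (b @ [prod_ne c] @ d)) (h c))"
  using assms unfolding OmegaComp_def by (simp add: prod_ne_collapse)

lemma comm_w1:
  fixes a b c d e :: "'w::semigroup_mult list" and f g h :: "'w list \<Rightarrow> 'v::ab_group_add"
  assumes "b \<noteq> []" "d \<noteq> []" "i = length a + 1" "n = length b" "j = length a + length c + 2" "p = length d" "m = length a + length c + length e + 2"
  shows "OmegaComp cmp (m+n-1) p (j+n-1) (OmegaComp cmp m n i f g) h (a@b@c@d@e)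
     = cmp (m+n-1) p (j+n-1) (cmp m n i (f (a @ [prod_ne b] @ c @ [prod_ne d] @ e)) (g b)) (h d)"
  using assms unfolding OmegaComp_def by simp

lemma comm_w2:
  fixes a b c d e :: "'w::semigroup_mult list" and f g h :: "'w list \<Rightarrow> 'v::ab_group_add"
  assumes "b \<noteq> []" "d \<noteq> []" "i = length a + 1" "n = length b" "j = length a + length c + 2" "p = length d" "m = length a + length c + length e + 2"
  shows "OmegaComp cmp (m+p-1) n i (OmegaComp cmp m p j f h) g (a@b@c@d@e)
     = cmp (m+p-1) n i (cmp m p j (f (a @ [prod_ne b] @ c @ [prod_ne d] @ e)) (h d)) (g b)"
  using assms unfolding OmegaComp_def by simp

lemma OmegaComp_out: "length as \<noteq> m + n - 1 \<Longrightarrow> OmegaComp cmp m n i f g as = 0"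
  unfolding OmegaComp_def by simp

lemma OmegaO_in: "f \<in> OmegaO Op n \<Longrightarrow> length xs = n \<Longrightarrow> f xs \<in> Op n"
  unfolding OmegaO_def by auto

lemma assoc_Omega:
  assumes A: "\<forall>m n p i j f g h. 1 \<le> i \<and> i \<le> m \<and> 1 \<le> j \<and> j \<le> n \<and> 1 \<le> p \<and>
        f \<in> Op m \<and> g \<in> Op n \<and> h \<in> Op p \<longrightarrow>
        cmp (m + n - 1) p (i + j - 1) (cmp m n i f g) h = cmp m (n + p - 1) i f (cmp n p j g h)"
  and r: "1 \<le> i" "i \<le> m" "1 \<le> j" "j \<le> n" "1 \<le> p"
  and fgh: "f \<in> OmegaO Op m" "g \<in> OmegaO Op n" "h \<in> OmegaO Op p"
  shows "OmegaComp cmp (m + n - 1) p (i + j - 1) (OmegaComp cmp m n i f g) h = OmegaComp cmp m (n + p - 1) i f (OmegaComp cmp n p j g h)"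
proof (rule ext)
  fix as
  show "OmegaComp cmp (m + n - 1) p (i + j - 1) (OmegaComp cmp m n i f g) h as = OmegaComp cmp m (n + p - 1) i f (OmegaComp cmp n p j g h) as"
  proof (cases "length as = m + n + p - 2")
    case True
    then have L: "length as = (i-1)+(j-1)+p+(n-j)+(m-i)" using r by simp
    then obtain a b c d e where D: "as = a@b@c@d@e" "length a = i-1" "length b = j-1" "length c = p" "length d = n-j" "length e = m-i"
      using split5[OF L] by blast
    have eqs: "c \<noteq> []" "i = length a + 1" "j = length b + 1" "p = length c" "n = length b + 1 + length d" "m = length a + 1 + length e"
      using D r by auto
    have mem: "f (a @ [prod_ne (b @ c @ d)] @ e) \<in> Op m" "g (b @ [prod_ne c] @ d) \<in> Op n" "h c \<in> Op p"
      using fgh eqs by (auto intro: OmegaO_in)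
    show ?thesis unfolding D assoc_w1[OF eqs] assoc_w2[OF eqs]
      using A r mem by blast
  next
    case False
    then show ?thesis using r by (simp add: OmegaComp_out)
  qed
qed

lemma comm_Omega:
  assumes A: "\<forall>m n p i j f g h. 1 \<le> i \<and> i < j \<and> j \<le> m \<and> 1 \<le> n \<and> 1 \<le> p \<and>
        f \<in> Op m \<and> g \<in> Op n \<and> h \<in> Op p \<longrightarrow>
        cmp (m + n - 1) p (j + n - 1) (cmp m n i f g) h = cmp (m + p - 1) n i (cmp m p j f h) g"
  and r: "1 \<le> i" "i < j" "j \<le> m" "1 \<le> n" "1 \<le> p"
  and fgh: "f \<in> OmegaO Op m" "g \<in> OmegaO Op n" "h \<in> OmegaO Op p"
  shows "OmegaComp cmp (m + n - 1) p (j + n - 1) (OmegaComp cmp m n i f g) h = OmegaComp cmp (m + p - 1) n i (OmegaComp cmp m p j f h) g"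
proof (rule ext)
  fix as
  show "OmegaComp cmp (m + n - 1) p (j + n - 1) (OmegaComp cmp m n i f g) h as = OmegaComp cmp (m + p - 1) n i (OmegaComp cmp m p j f h) g as"
  proof (cases "length as = m + n + p - 2")
    case True
    then have L: "length as = (i-1)+n+(j-i-1)+p+(m-j)" using r by simp
    then obtain a b c d e where D: "as = a@b@c@d@e" "length a = i-1" "length b = n" "length c = j-i-1" "length d = p" "length e = m-j"
      using split5[OF L] by blast
    have eqs: "b \<noteq> []" "d \<noteq> []" "i = length a + 1" "n = length b" "j = length a + length c + 2" "p = length d" "m = length a + length c + length e + 2"
      using D r by auto
    have mem: "f (a @ [prod_ne b] @ c @ [prod_ne d] @ e) \<in> Op m" "g b \<in> Op n" "h d \<in> Op p"
      using fgh eqs by (auto intro: OmegaO_in)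
    show ?thesis unfolding D comm_w1[OF eqs] comm_w2[OF eqs]
      using A r mem by blast
  next
    case False
    then show ?thesis using r by (simp add: OmegaComp_out)
  qed
qed


theorem theorem5p5:
  fixes sm :: "'k::{comm_ring_1, ring_char_0} \<Rightarrow> 'v::ab_group_add \<Rightarrow> 'v"
    and Op :: "nat \<Rightarrow> 'v set"
    and cmp :: "nat \<Rightarrow> nat \<Rightarrow> nat \<Rightarrow> 'v \<Rightarrow> 'v \<Rightarrow> 'v"
    and u :: 'v
  assumes "ns_operad sm Op cmp u"
  shows "ns_operad (OmegaSmult sm) (OmegaO Op :: nat \<Rightarrow> ('w::semigroup_mult list \<Rightarrow> 'v) set)
           (OmegaComp cmp) (OmegaUnit u)"
proof -
  note H = assms[unfolded ns_operad_def]
  have KM: "\<forall>n\<ge>1. kmodule sm (Op n)" by (rule H[THEN conjunct1])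
  have CL: "\<forall>m n i f g. 1 \<le> n \<and> 1 \<le> i \<and> i \<le> m \<and> f \<in> Op m \<and> g \<in> Op n \<longrightarrow>
        cmp m n i f g \<in> Op (m + n - 1)" by (rule H[THEN conjunct2, THEN conjunct1])
  have L1: "\<forall>m n i f f' g c. 1 \<le> n \<and> 1 \<le> i \<and> i \<le> m \<and> f \<in> Op m \<and> f' \<in> Op m \<and> g \<in> Op n \<longrightarrow>
        cmp m n i (f + f') g = cmp m n i f g + cmp m n i f' g \<and>
        cmp m n i (sm c f) g = sm c (cmp m n i f g)" by (rule H[THEN conjunct2, THEN conjunct2, THEN conjunct1])
  have L2: "\<forall>m n i f g g' c. 1 \<le> n \<and> 1 \<le> i \<and> i \<le> m \<and> f \<in> Op m \<and> g \<in> Op n \<and> g' \<in> Op n \<longrightarrow>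
        cmp m n i f (g + g') = cmp m n i f g + cmp m n i f g' \<and>
        cmp m n i f (sm c g) = sm c (cmp m n i f g)" by (rule H[THEN conjunct2, THEN conjunct2, THEN conjunct2, THEN conjunct1])
  have AS: "\<forall>m n p i j f g h. 1 \<le> i \<and> i \<le> m \<and> 1 \<le> j \<and> j \<le> n \<and> 1 \<le> p \<and>
        f \<in> Op m \<and> g \<in> Op n \<and> h \<in> Op p \<longrightarrow>
        cmp (m + n - 1) p (i + j - 1) (cmp m n i f g) h = cmp m (n + p - 1) i f (cmp n p j g h)"
    by (rule H[THEN conjunct2, THEN conjunct2, THEN conjunct2, THEN conjunct2, THEN conjunct1])
  have CO: "\<forall>m n p i j f g h. 1 \<le> i \<and> i < j \<and> j \<le> m \<and> 1 \<le> n \<and> 1 \<le> p \<and>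
        f \<in> Op m \<and> g \<in> Op n \<and> h \<in> Op p \<longrightarrow>
        cmp (m + n - 1) p (j + n - 1) (cmp m n i f g) h = cmp (m + p - 1) n i (cmp m p j f h) g"
    by (rule H[THEN conjunct2, THEN conjunct2, THEN conjunct2, THEN conjunct2, THEN conjunct2, THEN conjunct1])
  have U: "u \<in> Op 1" by (rule H[THEN conjunct2, THEN conjunct2, THEN conjunct2, THEN conjunct2, THEN conjunct2, THEN conjunct2, THEN conjunct1])
  have UR: "\<forall>m i f. 1 \<le> i \<and> i \<le> m \<and> f \<in> Op m \<longrightarrow> cmp m 1 i f u = f" by (rule H[THEN conjunct2, THEN conjunct2, THEN conjunct2, THEN conjunct2, THEN conjunct2, THEN conjunct2, THEN conjunct2, THEN conjunct1])
  have UL: "\<forall>m f. 1 \<le> m \<and> f \<in> Op m \<longrightarrow> cmp 1 m 1 u f = f" by (rule H[THEN conjunct2, THEN conjunct2, THEN conjunct2, THEN conjunct2, THEN conjunct2, THEN conjunct2, THEN conjunct2, THEN conjunct2])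
  have sm0: "sm c 0 = 0" for c using kmod0[of sm "Op 1"] KM by simp
  have wlen: "length (take (i - 1) as @ [prod_ne (take n (drop (i - 1) as))] @ drop (i - 1 + n) as) = m"
    "length (take n (drop (i - 1) as)) = n"
    if "length as = m + n - 1" "1 \<le> n" "1 \<le> i" "i \<le> m" for as :: "'w list" and i m n
    using that by auto
  have L1b: "cmp m n i (sm c x) z = sm c (cmp m n i x z)"
    if "1 \<le> n" "1 \<le> i" "i \<le> m" "x \<in> Op m" "z \<in> Op n" for m n i x z c
    using L1 that by blast
  have L1a: "cmp m n i (x + y) z = cmp m n i x z + cmp m n i y z"
    if "1 \<le> n" "1 \<le> i" "i \<le> m" "x \<in> Op m" "y \<in> Op m" "z \<in> Op n" for m n i x y z
    using L1 that by blast
  have L2b: "cmp m n i z (sm c x) = sm c (cmp m n i z x)"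
    if "1 \<le> n" "1 \<le> i" "i \<le> m" "x \<in> Op n" "z \<in> Op m" for m n i x z c
    using L2 that by blast
  have L2a: "cmp m n i z (x + y) = cmp m n i z x + cmp m n i z y"
    if "1 \<le> n" "1 \<le> i" "i \<le> m" "x \<in> Op n" "y \<in> Op n" "z \<in> Op m" for m n i x y z
    using L2 that by blast
  have memW: "f (take (i - 1) xs @ [prod_ne (take n (drop (i - 1) xs))] @ drop (i - 1 + n) xs) \<in> Op m"
    "g (take n (drop (i - 1) xs)) \<in> Op n"
    if "length xs = m + n - 1" "1 \<le> n" "1 \<le> i" "i \<le> m" "f \<in> OmegaO Op m" "g \<in> OmegaO Op n"
    for xs :: "'w list" and i m n f g
    using OmegaO_in wlen[OF that(1-4)] that(5,6) by blast+
  show ?thesis unfolding ns_operad_def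
  proof (intro conjI)
    show "\<forall>n\<ge>1. kmodule (OmegaSmult sm) (OmegaO Op n)" using KM kmodule_Omega by blast
    show "\<forall>m n i f g. 1 \<le> n \<and> 1 \<le> i \<and> i \<le> m \<and> f \<in> (OmegaO Op m :: ('w list \<Rightarrow> 'v) set) \<and> g \<in> OmegaO Op n \<longrightarrow>
        OmegaComp cmp m n i f g \<in> OmegaO Op (m + n - 1)"
    proof (intro allI impI)
      fix m n i and f g :: "'w list \<Rightarrow> 'v"
      assume a: "1 \<le> n \<and> 1 \<le> i \<and> i \<le> m \<and> f \<in> OmegaO Op m \<and> g \<in> OmegaO Op n"
      show "OmegaComp cmp m n i f g \<in> OmegaO Op (m + n - 1)"
        unfolding OmegaO_def
      proof (intro CollectI conjI allI impI)
        fix xs :: "'w list"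
        assume l: "length xs = m + n - 1"
        have "f (take (i - 1) xs @ [prod_ne (take n (drop (i - 1) xs))] @ drop (i - 1 + n) xs) \<in> Op m"
          using OmegaO_in wlen(1)[OF l] a by blast
        moreover have "g (take n (drop (i - 1) xs)) \<in> Op n"
          using OmegaO_in wlen(2)[OF l] a by blast
        ultimately show "OmegaComp cmp m n i f g xs \<in> Op (m + n - 1)"
          unfolding OmegaComp_def using l a CL by simp
      next
        fix xs :: "'w list"
        assume l: "length xs \<noteq> m + n - 1"
        then show "OmegaComp cmp m n i f g xs = 0" by (rule OmegaComp_out)
      qed
    qed
    show "\<forall>m n i f f' g c. 1 \<le> n \<and> 1 \<le> i \<and> i \<le> m \<and> f \<in> (OmegaO Op m :: ('w list \<Rightarrow> 'v) set) \<and> f' \<in> OmegaO Op m \<and> g \<in> OmegaO Op n \<longrightarrow>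
        OmegaComp cmp m n i (f + f') g = OmegaComp cmp m n i f g + OmegaComp cmp m n i f' g \<and>
        OmegaComp cmp m n i (OmegaSmult sm c f) g = OmegaSmult sm c (OmegaComp cmp m n i f g)"
    proof (intro allI impI conjI)
      fix m n i c and f f' g :: "'w list \<Rightarrow> 'v"
      assume a: "1 \<le> n \<and> 1 \<le> i \<and> i \<le> m \<and> f \<in> OmegaO Op m \<and> f' \<in> OmegaO Op m \<and> g \<in> OmegaO Op n"
      show "OmegaComp cmp m n i (f + f') g = OmegaComp cmp m n i f g + OmegaComp cmp m n i f' g"
      proof (rule ext)
        fix xs :: "'w list"
        show "OmegaComp cmp m n i (f + f') g xs = (OmegaComp cmp m n i f g + OmegaComp cmp m n i f' g) xs"
        proof (cases "length xs = m + n - 1")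
          case True
          then show ?thesis using True a memW[OF True] L1a L1b
            by (auto simp: OmegaComp_def plus_fun_def OmegaSmult_def)
        next
          case False
          then show ?thesis using sm0 unfolding OmegaComp_def plus_fun_def OmegaSmult_def by simp
        qed
      qed
      show "OmegaComp cmp m n i (OmegaSmult sm c f) g = OmegaSmult sm c (OmegaComp cmp m n i f g)"
      proof (rule ext)
        fix xs :: "'w list"
        show "OmegaComp cmp m n i (OmegaSmult sm c f) g xs = (OmegaSmult sm c (OmegaComp cmp m n i f g)) xs"
        proof (cases "length xs = m + n - 1")
          case True
          then show ?thesis using True a memW[OF True] L1a L1b
            by (auto simp: OmegaComp_def plus_fun_def OmegaSmult_def)
        next
          case False
          then show ?thesis using sm0 unfolding OmegaComp_def plus_fun_def OmegaSmult_def by simp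
        qed
      qed
    qed
    show "\<forall>m n i f g g' c. 1 \<le> n \<and> 1 \<le> i \<and> i \<le> m \<and> f \<in> (OmegaO Op m :: ('w list \<Rightarrow> 'v) set) \<and> g \<in> OmegaO Op n \<and> g' \<in> OmegaO Op n \<longrightarrow>
        OmegaComp cmp m n i f (g + g') = OmegaComp cmp m n i f g + OmegaComp cmp m n i f g' \<and>
        OmegaComp cmp m n i f (OmegaSmult sm c g) = OmegaSmult sm c (OmegaComp cmp m n i f g)"
    proof (intro allI impI conjI)
      fix m n i c and f g g' :: "'w list \<Rightarrow> 'v"
      assume a: "1 \<le> n \<and> 1 \<le> i \<and> i \<le> m \<and> f \<in> OmegaO Op m \<and> g \<in> OmegaO Op n \<and> g' \<in> OmegaO Op n"
      show "OmegaComp cmp m n i f (g + g') = OmegaComp cmp m n i f g + OmegaComp cmp m n i f g'"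
      proof (rule ext)
        fix xs :: "'w list"
        show "OmegaComp cmp m n i f (g + g') xs = (OmegaComp cmp m n i f g + OmegaComp cmp m n i f g') xs"
        proof (cases "length xs = m + n - 1")
          case True
          then show ?thesis using True a memW[OF True] L2a L2b
            by (auto simp: OmegaComp_def plus_fun_def OmegaSmult_def)
        next
          case False
          then show ?thesis using sm0 unfolding OmegaComp_def plus_fun_def OmegaSmult_def by simp
        qed
      qed
      show "OmegaComp cmp m n i f (OmegaSmult sm c g) = OmegaSmult sm c (OmegaComp cmp m n i f g)"
      proof (rule ext)
        fix xs :: "'w list"
        show "OmegaComp cmp m n i f (OmegaSmult sm c g) xs = (OmegaSmult sm c (OmegaComp cmp m n i f g)) xs"
        proof (cases "length xs = m + n - 1")
          case True
          then show ?thesis using True a memW[OF True] L2a L2b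
            by (auto simp: OmegaComp_def plus_fun_def OmegaSmult_def)
        next
          case False
          then show ?thesis using sm0 unfolding OmegaComp_def plus_fun_def OmegaSmult_def by simp
        qed
      qed
    qed
    show "\<forall>m n p i j f g h. 1 \<le> i \<and> i \<le> m \<and> 1 \<le> j \<and> j \<le> n \<and> 1 \<le> p \<and>
        f \<in> (OmegaO Op m :: ('w list \<Rightarrow> 'v) set) \<and> g \<in> OmegaO Op n \<and> h \<in> OmegaO Op p \<longrightarrow>
        OmegaComp cmp (m + n - 1) p (i + j - 1) (OmegaComp cmp m n i f g) h = OmegaComp cmp m (n + p - 1) i f (OmegaComp cmp n p j g h)"
      using assoc_Omega[OF AS] by blast
    show "\<forall>m n p i j f g h. 1 \<le> i \<and> i < j \<and> j \<le> m \<and> 1 \<le> n \<and> 1 \<le> p \<and>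
        f \<in> (OmegaO Op m :: ('w list \<Rightarrow> 'v) set) \<and> g \<in> OmegaO Op n \<and> h \<in> OmegaO Op p \<longrightarrow>
        OmegaComp cmp (m + n - 1) p (j + n - 1) (OmegaComp cmp m n i f g) h = OmegaComp cmp (m + p - 1) n i (OmegaComp cmp m p j f h) g"
      using comm_Omega[OF CO] by blast
    show "(OmegaUnit u :: 'w list \<Rightarrow> 'v) \<in> OmegaO Op 1"
      unfolding OmegaO_def OmegaUnit_def using U by auto
    show "\<forall>m i f. 1 \<le> i \<and> i \<le> m \<and> f \<in> (OmegaO Op m :: ('w list \<Rightarrow> 'v) set) \<longrightarrow> OmegaComp cmp m 1 i f (OmegaUnit u) = f"
    proof (intro allI impI ext)
      fix m i as and f :: "'w list \<Rightarrow> 'v"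
      assume a: "1 \<le> i \<and> i \<le> m \<and> f \<in> OmegaO Op m"
      then show "OmegaComp cmp m 1 i f (OmegaUnit u) as = f as"
        using unit_r[of i m cmp f u as] UR OmegaO_in[of f Op m as]
        by (auto simp: OmegaO_def)
    qed
    show "\<forall>m f. 1 \<le> m \<and> f \<in> (OmegaO Op m :: ('w list \<Rightarrow> 'v) set) \<longrightarrow> OmegaComp cmp 1 m 1 (OmegaUnit u) f = f"
    proof (intro allI impI ext)
      fix m as and f :: "'w list \<Rightarrow> 'v"
      assume a: "1 \<le> m \<and> f \<in> OmegaO Op m"
      then show "OmegaComp cmp 1 m 1 (OmegaUnit u) f as = f as"
        using unit_l[of m cmp u f as] UL OmegaO_in[of f Op m as]
        by (auto simp: OmegaO_def)
    qed
  qed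
qed

end
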